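(* Let $y:[0,\tau_f]\to\mathbb{R}^{n_y}$, $y(\tau)=(q(\tau),v(\tau),t(\tau))$, be a solution of the time-freezing system $y'\in F_{\mathrm{TF}}(y,u)$ with $y(0)\in\Sigma$, and suppose that $\varphi(x(\tau),u(\tau))\le 0$ for all $\tau\in[0,\tau_f]$ (persistent contact). Then: (i) the convex multipliers $\theta_1,\theta_2\ge 0$ in the representation $y'=\theta_1 f_1(y,u)+\theta_2 f_2(y)$, $\theta_1+\theta_2=1$, are unique; (ii) the dynamics of the sliding mode are given by $y'=\gamma(x,u)\,(f_{\mathrm{DAE}}(x,u),1)$, where $\gamma(x,u)\in(0,1]$ is the time-rescaling factor $$\gamma(x,u):=\frac{D(q)a_{\mathrm{n}}}{D(q)a_{\mathrm{n}}-\varphi(x,u)}.$$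
   Context: Let $f_v:\mathbb{R}^{n_q}\times\mathbb{R}^{n_q}\times\mathbb{R}^{n_u}\to\mathbb{R}^{n_q}$, $M:\mathbb{R}^{n_q}\to\mathbb{R}^{n_q\times n_q}$ and $f_c:\mathbb{R}^{n_q}\to\mathbb{R}$ be at least twice continuously differentiable, with $M(q)$ symmetric positive definite. Let $x=(q,v)\in\mathbb{R}^{2n_q}$, $n(q):=\nabla_q f_c(q)$, $D(q):=n(q)^\top M(q)^{-1}n(q)$ (so $D(q)>0$ when $n(q)\neq0$), $\varphi(x,u):=n(q)^\top f_v(q,v,u)+\nabla_q\big(n(q)^\top v\big)^\top v$, $f_{\mathrm{ODE}}(x,u):=(v,f_v(q,v,u))$ and $f_{\mathrm{DAE}}(x,u):=\big(v,\ f_v(q,v,u)-M(q)^{-1}n(q)D(q)^{-1}\varphi(x,u)\big)$. The time-freezing state is $y=(x,t)\in\mathbb{R}^{n_y}$, $n_y=2n_q+1$, where $t$ is a clock state, evolving in numerical time $\tau$ with $y'=\mathrm{d}y/\mathrm{d}\tau$, and $u(\tau)\in\mathbb{R}^{n_u}$ is a given control function. Switching functions: $c_1(y)=f_c(q)$, $c_2(y)=n(q)^\top v$. Regions: $R_1=\{y: c_1(y)>0\}\cup\{y: c_1(y)<0,\ c_2(y)>0\}$, $R_2=\{y: c_1(y)<0,\ c_2(y)<0\}$. Vector fields: $f_1(y,u)=(f_{\mathrm{ODE}}(x,u),1)$ and $f_2(y)=f_{\mathrm{aux,n}}(y):=(\mathbf{0}_{n_q,1},\ M(q)^{-1}n(q)a_{\mathrm{n}},\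 0)$ with a constant $a_{\mathrm{n}}>0$. The time-freezing system is the Filippov differential inclusion $$y'\in F_{\mathrm{TF}}(y,u):=\{\theta_1 f_1(y,u)+\theta_2 f_2(y)\mid \theta_1+\theta_2=1,\ \theta\ge0,\ \theta_i=0 \text{ if } y\notin\overline{R_i},\ i=1,2\}.$$ Define $\Sigma:=\{y\in\mathbb{R}^{n_y}\mid f_c(q)=0,\ n(q)^\top v=0\}$. A sliding mode is an evolution of $y$ on $\Sigma$. *)

theory Defs
  imports "HOL-Analysis.Analysis"
begin

definition C1_fun :: "('a::real_normed_vector \<Rightarrow> 'b::real_normed_vector) \<Rightarrow> bool" where
  "C1_fun f \<longleftrightarrow> (\<exists>f' :: 'a \<Rightarrow> ('a \<Rightarrow>\<^sub>L 'b).
      (\<forall>x. (f has_derivative blinfun_apply (f' x)) (at x)) \<and> continuous_on UNIV f')"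

definition C2_fun :: "('a::real_normed_vector \<Rightarrow> 'b::real_normed_vector) \<Rightarrow> bool" where
  "C2_fun f \<longleftrightarrow> (\<exists>f' :: 'a \<Rightarrow> ('a \<Rightarrow>\<^sub>L 'b).
      (\<forall>x. (f has_derivative blinfun_apply (f' x)) (at x)) \<and> C1_fun f')"

definition sym_pos_def :: "real^'n^'n \<Rightarrow> bool" where
  "sym_pos_def A \<longleftrightarrow> transpose A = A \<and> (\<forall>z. z \<noteq> 0 \<longrightarrow> z \<bullet> (A *v z) > 0)"

definition abs_continuous_on :: "real \<Rightarrow> real \<Rightarrow> (real \<Rightarrow> 'a::real_normed_vector) \<Rightarrow> bool" where
  "abs_continuous_on a b y \<longleftrightarrow>
     (\<forall>\<epsilon>>0. \<exists>\<delta>>0. \<forall>(m::nat) (s::nat \<Rightarrow> real) (t::nat \<Rightarrow> real).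
        (\<forall>i<m. a \<le> s i \<and> s i \<le> t i \<and> t i \<le> b) \<and>
        (\<forall>i<m. \<forall>j<m. i \<noteq> j \<longrightarrow> t i \<le> s j \<or> t j \<le> s i) \<and>
        (\<Sum>i<m. t i - s i) < \<delta>
        \<longrightarrow> (\<Sum>i<m. norm (y (t i) - y (s i))) < \<epsilon>)"

definition gradient :: "(real^'n \<Rightarrow> real) \<Rightarrow> real^'n \<Rightarrow> real^'n" where
  "gradient f q = (\<chi> i. frechet_derivative f (at q) (axis i 1))"

definition nvec :: "(real^'n \<Rightarrow> real) \<Rightarrow> real^'n \<Rightarrow> real^'n" where
  "nvec fc q = gradient fc q"

definition Dq :: "(real^'n \<Rightarrow> real^'n^'n) \<Rightarrow> (real^'n \<Rightarrow> real) \<Rightarrow> real^'n \<Rightarrow> real" where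
  "Dq M fc q = nvec fc q \<bullet> (matrix_inv (M q) *v nvec fc q)"

text \<open>phi(x,u) = n(q)^T f_v(q,v,u) + grad_q(n(q)^T v)^T v; the second term is the
  directional derivative of q' |-> n(q')^T v at q in direction v.\<close>
definition phi :: "(real^'n \<Rightarrow> real^'n \<Rightarrow> real^'m \<Rightarrow> real^'n) \<Rightarrow> (real^'n \<Rightarrow> real)
    \<Rightarrow> real^'n \<Rightarrow> real^'n \<Rightarrow> real^'m \<Rightarrow> real" where
  "phi fv fc q v u = nvec fc q \<bullet> fv q v u
     + frechet_derivative (\<lambda>p. nvec fc p \<bullet> v) (at q) v"

definition fDAE_v :: "(real^'n \<Rightarrow> real^'n \<Rightarrow> real^'m \<Rightarrow> real^'n) \<Rightarrow> (real^'n \<Rightarrow> real^'n^'n)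
    \<Rightarrow> (real^'n \<Rightarrow> real) \<Rightarrow> real^'n \<Rightarrow> real^'n \<Rightarrow> real^'m \<Rightarrow> real^'n" where
  "fDAE_v fv M fc q v u = fv q v u
     - (phi fv fc q v u / Dq M fc q) *\<^sub>R (matrix_inv (M q) *v nvec fc q)"

definition fDAE :: "(real^'n \<Rightarrow> real^'n \<Rightarrow> real^'m \<Rightarrow> real^'n) \<Rightarrow> (real^'n \<Rightarrow> real^'n^'n)
    \<Rightarrow> (real^'n \<Rightarrow> real) \<Rightarrow> real^'n \<Rightarrow> real^'n \<Rightarrow> real^'m \<Rightarrow> (real^'n) \<times> (real^'n)" where
  "fDAE fv M fc q v u = (v, fDAE_v fv M fc q v u)"

definition gamma :: "(real^'n \<Rightarrow> real^'n \<Rightarrow> real^'m \<Rightarrow> real^'n) \<Rightarrow> (real^'n \<Rightarrow> real^'n^'n)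
    \<Rightarrow> (real^'n \<Rightarrow> real) \<Rightarrow> real \<Rightarrow> real^'n \<Rightarrow> real^'n \<Rightarrow> real^'m \<Rightarrow> real" where
  "gamma fv M fc an q v u = Dq M fc q * an / (Dq M fc q * an - phi fv fc q v u)"

section \<open>Time-freezing system; state y = (q, v, t)\<close>

definition c1 :: "(real^'n \<Rightarrow> real) \<Rightarrow> (real^'n) \<times> (real^'n) \<times> real \<Rightarrow> real" where
  "c1 fc y = fc (fst y)"

definition c2 :: "(real^'n \<Rightarrow> real) \<Rightarrow> (real^'n) \<times> (real^'n) \<times> real \<Rightarrow> real" where
  "c2 fc y = nvec fc (fst y) \<bullet> fst (snd y)"

definition R1 :: "(real^'n \<Rightarrow> real) \<Rightarrow> ((real^'n) \<times> (real^'n) \<times> real) set" where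
  "R1 fc = {y. c1 fc y > 0} \<union> {y. c1 fc y < 0 \<and> c2 fc y > 0}"

definition R2 :: "(real^'n \<Rightarrow> real) \<Rightarrow> ((real^'n) \<times> (real^'n) \<times> real) set" where
  "R2 fc = {y. c1 fc y < 0 \<and> c2 fc y < 0}"

definition f1 :: "(real^'n \<Rightarrow> real^'n \<Rightarrow> real^'m \<Rightarrow> real^'n)
    \<Rightarrow> (real^'n) \<times> (real^'n) \<times> real \<Rightarrow> real^'m \<Rightarrow> (real^'n) \<times> (real^'n) \<times> real" where
  "f1 fv y u = (fst (snd y), fv (fst y) (fst (snd y)) u, 1)"

definition f2 :: "(real^'n \<Rightarrow> real^'n^'n) \<Rightarrow> (real^'n \<Rightarrow> real) \<Rightarrow> real
    \<Rightarrow> (real^'n) \<times> (real^'n) \<times> real \<Rightarrow> (real^'n) \<times> (real^'n) \<times> real" where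
  "f2 M fc an y = (0, an *\<^sub>R (matrix_inv (M (fst y)) *v nvec fc (fst y)), 0)"

definition TF_mult :: "(real^'n \<Rightarrow> real) \<Rightarrow> (real^'n) \<times> (real^'n) \<times> real \<Rightarrow> real \<times> real \<Rightarrow> bool" where
  "TF_mult fc y \<theta> \<longleftrightarrow> fst \<theta> \<ge> 0 \<and> snd \<theta> \<ge> 0 \<and> fst \<theta> + snd \<theta> = 1
     \<and> (y \<notin> closure (R1 fc) \<longrightarrow> fst \<theta> = 0) \<and> (y \<notin> closure (R2 fc) \<longrightarrow> snd \<theta> = 0)"

definition F_TF :: "(real^'n \<Rightarrow> real^'n \<Rightarrow> real^'m \<Rightarrow> real^'n) \<Rightarrow> (real^'n \<Rightarrow> real^'n^'n)
    \<Rightarrow> (real^'n \<Rightarrow> real) \<Rightarrow> real \<Rightarrow> (real^'n) \<times> (real^'n) \<times> real \<Rightarrow> real^'m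
    \<Rightarrow> ((real^'n) \<times> (real^'n) \<times> real) set" where
  "F_TF fv M fc an y u =
     {fst \<theta> *\<^sub>R f1 fv y u + snd \<theta> *\<^sub>R f2 M fc an y | \<theta>. TF_mult fc y \<theta>}"

definition Sigma_set :: "(real^'n \<Rightarrow> real) \<Rightarrow> ((real^'n) \<times> (real^'n) \<times> real) set" where
  "Sigma_set fc = {y. fc (fst y) = 0 \<and> nvec fc (fst y) \<bullet> fst (snd y) = 0}"

definition TF_solution :: "(real^'n \<Rightarrow> real^'n \<Rightarrow> real^'m \<Rightarrow> real^'n) \<Rightarrow> (real^'n \<Rightarrow> real^'n^'n)
    \<Rightarrow> (real^'n \<Rightarrow> real) \<Rightarrow> real \<Rightarrow> (real \<Rightarrow> real^'m) \<Rightarrow> real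
    \<Rightarrow> (real \<Rightarrow> (real^'n) \<times> (real^'n) \<times> real) \<Rightarrow> bool" where
  "TF_solution fv M fc an u tf y \<longleftrightarrow>
     abs_continuous_on 0 tf y \<and>
     (AE \<tau> in lborel. \<tau> \<in> {0..tf} \<longrightarrow>
        (\<exists>d. (y has_vector_derivative d) (at \<tau> within {0..tf}) \<and> d \<in> F_TF fv M fc an (y \<tau>) (u \<tau>)))"

end

theory Submission
  imports Defs
begin


lemma AC_finite:
  fixes g :: "real \<Rightarrow> 'a::real_normed_vector"
  assumes ac: "abs_continuous_on a b g" and e: "e > 0"
  obtains \<delta> where "\<delta> > 0"
    "\<And>F. finite F \<Longrightarrow> (\<forall>(u,v)\<in>F. a \<le> u \<and> u \<le> v \<and> v \<le> b) \<Longrightarrow>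
       (\<forall>(u,v)\<in>F. \<forall>(u',v')\<in>F. (u,v) \<noteq> (u',v') \<longrightarrow> v \<le> u' \<or> v' \<le> u) \<Longrightarrow>
       (\<Sum>(u,v)\<in>F. v - u) < \<delta> \<Longrightarrow> (\<Sum>(u,v)\<in>F. norm (g v - g u)) < e"
proof -
  from ac[unfolded abs_continuous_on_def, rule_format, OF e] obtain \<delta> where d: "\<delta> > 0" and
    H0: "\<forall>(m::nat) (s::nat \<Rightarrow> real) (t::nat \<Rightarrow> real).
        (\<forall>i<m. a \<le> s i \<and> s i \<le> t i \<and> t i \<le> b) \<and>
        (\<forall>i<m. \<forall>j<m. i \<noteq> j \<longrightarrow> t i \<le> s j \<or> t j \<le> s i) \<and>
        (\<Sum>i<m. t i - s i) < \<delta>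
        \<longrightarrow> (\<Sum>i<m. norm (g (t i) - g (s i))) < e" by blast
  note H = H0[rule_format]
  show ?thesis
  proof (rule that[OF d])
    fix F :: "(real \<times> real) set"
    assume fin: "finite F" and F1: "\<forall>(u,v)\<in>F. a \<le> u \<and> u \<le> v \<and> v \<le> b"
      and F2: "\<forall>(u,v)\<in>F. \<forall>(u',v')\<in>F. (u,v) \<noteq> (u',v') \<longrightarrow> v \<le> u' \<or> v' \<le> u"
      and F3: "(\<Sum>(u,v)\<in>F. v - u) < \<delta>"
    obtain h where h: "bij_betw h {..<card F} F"
      using ex_bij_betw_nat_finite[OF fin] by (metis atLeast0LessThan)
    define s where "s i = fst (h i)" for i
    define t where "t i = snd (h i)" for i
    have hin: "i < card F \<Longrightarrow> h i \<in> F" for i using h by (auto simp: bij_betw_def)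
    have hinj: "i < card F \<Longrightarrow> j < card F \<Longrightarrow> i \<noteq> j \<Longrightarrow> h i \<noteq> h j" for i j
      using h by (auto simp: bij_betw_def inj_on_def)
    have st: "h i = (s i, t i)" for i by (simp add: s_def t_def)
    have s1: "(\<Sum>i<card F. t i - s i) = (\<Sum>(u,v)\<in>F. v - u)"
      using sum.reindex_bij_betw[OF h, of "\<lambda>(u,v). v - u"] by (simp add: s_def t_def case_prod_beta)
    have s2: "(\<Sum>i<card F. norm (g (t i) - g (s i))) = (\<Sum>(u,v)\<in>F. norm (g v - g u))"
      using sum.reindex_bij_betw[OF h, of "\<lambda>(u,v). norm (g v - g u)"] by (simp add: s_def t_def case_prod_beta)
    have "(\<Sum>i<card F. norm (g (t i) - g (s i))) < e"
    proof (rule H, intro conjI allI impI)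
      fix i assume "i < card F"
      then have "(s i, t i) \<in> F" using hin st by metis
      then show "a \<le> s i" "s i \<le> t i" "t i \<le> b" using F1 by auto
    next
      fix i j assume "i < card F" "j < card F" "i \<noteq> j"
      then have "(s i, t i) \<in> F" "(s j, t j) \<in> F" "(s i, t i) \<noteq> (s j, t j)"
        using hin hinj st by metis+
      then show "t i \<le> s j \<or> t j \<le> s i" using F2 by fastforce
    next
      show "(\<Sum>i<card F. t i - s i) < \<delta>" using s1 F3 by simp
    qed
    then show "(\<Sum>(u,v)\<in>F. norm (g v - g u)) < e" using s2 by simp
  qed
qed

lemma interval_facts:
  fixes K :: "real set"
  assumes "\<exists>u v. K = cbox u v" "x \<in> K"
  obtains u v where "K = {u..v}" "u \<le> x" "x \<le> v" "Inf K = u" "Sup K = v" "measure lborel K = v - u"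
proof -
  obtain u v where K: "K = {u..v}" using assms(1) by (auto simp: cbox_interval)
  then have "u \<le> x" "x \<le> v" using assms(2) by auto
  then show ?thesis using that[OF K] K by (simp add: content_real)
qed

lemma AC_mono:
  fixes g :: "real \<Rightarrow> real"
  assumes ab: "a \<le> b" and ac: "abs_continuous_on a b g" and N: "negligible N"
    and der: "\<And>x. x \<in> {a<..<b} \<Longrightarrow> x \<notin> N \<Longrightarrow> \<exists>d\<ge>0. (g has_real_derivative d) (at x within {a..b})"
  shows "g a \<le> g b"
proof -
  have key: "g a - g b \<le> e * (1 + (b - a))" if e: "e > 0" for e
  proof -
    obtain \<delta> where d: "\<delta> > 0" and AC: "\<And>F. finite F \<Longrightarrow> (\<forall>(u,v)\<in>F. a \<le> u \<and> u \<le> v \<and> v \<le> b) \<Longrightarrow>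
       (\<forall>(u,v)\<in>F. \<forall>(u',v')\<in>F. (u,v) \<noteq> (u',v') \<longrightarrow> v \<le> u' \<or> v' \<le> u) \<Longrightarrow>
       (\<Sum>(u,v)\<in>F. v - u) < \<delta> \<Longrightarrow> (\<Sum>(u,v)\<in>F. norm (g v - g u)) < e"
      using AC_finite[OF ac e] by blast
    define N' where "N' = N \<union> {a,b}"
    have N': "negligible N'" using N by (simp add: N'_def)
    then have "(indicat_real N' has_integral 0) (cbox a b)" unfolding negligible_def by blast
    then obtain \<gamma>1 where g1: "gauge \<gamma>1" and G1: "\<And>D. D tagged_division_of cbox a b \<Longrightarrow> \<gamma>1 fine D \<Longrightarrow>
        norm ((\<Sum>(x,K)\<in>D. measure lborel K *\<^sub>R indicat_real N' x) - 0) < \<delta>"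
      using d unfolding has_integral by meson
    define Q where "Q x y \<longleftrightarrow> (x \<le> y \<longrightarrow> g y - g x \<ge> -e*(y-x)) \<and> (y \<le> x \<longrightarrow> g x - g y \<ge> -e*(x-y))" for x y
    have loc: "\<exists>r>0. \<forall>y\<in>{a..b}. dist y x < r \<longrightarrow> Q x y" if x: "x \<in> {a<..<b} - N'" for x
    proof -
      obtain dd where dd: "dd \<ge> 0" "(g has_real_derivative dd) (at x within {a..b})"
        using der x by (auto simp: N'_def)
      then have "((\<lambda>y. (g y - g x) / (y - x)) \<longlongrightarrow> dd) (at x within {a..b})"
        by (simp add: has_field_derivative_iff)
      then have "eventually (\<lambda>y. dist ((g y - g x) / (y - x)) dd < e) (at x within {a..b})"
        using e tendsto_iff by metis
      then obtain r where r: "r > 0" "\<And>y. y \<in> {a..b} \<Longrightarrow> y \<noteq> x \<Longrightarrow> dist y x < r \<Longrightarrow> dist ((g y - g x) / (y - x)) dd < e"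
        unfolding eventually_at by blast
      have "Q x y" if y: "y \<in> {a..b}" "dist y x < r" for y
      proof (cases "y = x")
        case True then show ?thesis by (simp add: Q_def)
      next
        case False
        then have q: "(g y - g x) / (y - x) > -e" using r(2)[OF y(1) False y(2)] dd(1)
          by (auto simp: dist_real_def abs_less_iff)
        show ?thesis
        proof (cases "x < y")
          case True
          then have "g y - g x > -e * (y - x)" using q by (simp add: field_simps)
          then show ?thesis using True by (simp add: Q_def)
        next
          case False
          then have "y < x" using \<open>y \<noteq> x\<close> by simp
          then have "g y - g x < -e * (y - x)" using q by (simp add: field_simps)
          then show ?thesis using \<open>y < x\<close> by (simp add: Q_def algebra_simps)
        qed
      qed
      then show ?thesis using r(1) by blast
    qed
    define r where "r x = (if x \<in> {a<..<b} - N' then SOME r. r > 0 \<and> (\<forall>y\<in>{a..b}. dist y x < r \<longrightarrow> Q x y) else 1)" for x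
    have rpos: "r x > 0" for x
    proof (cases "x \<in> {a<..<b} - N'")
      case True then show ?thesis using someI_ex[OF loc[OF True]] by (simp add: r_def)
    next
      case False then show ?thesis unfolding r_def by auto
    qed
    have rQ: "\<And>y. y \<in> {a..b} \<Longrightarrow> dist y x < r x \<Longrightarrow> Q x y" if "x \<in> {a<..<b} - N'" for x
      using someI_ex[OF loc[OF that]] that by (simp add: r_def)
    have g2: "gauge (\<lambda>x. ball x (r x))" using rpos by (simp add: gauge_ball_dependent)
    obtain D where D: "D tagged_division_of cbox a b" and fine: "(\<lambda>x. \<gamma>1 x \<inter> ball x (r x)) fine D"
      using fine_division_exists[OF gauge_Int[OF g1 g2]] by blast
    have fine12: "\<gamma>1 fine D \<and> (\<lambda>x. ball x (r x)) fine D" using fine_Int[of \<gamma>1 "\<lambda>x. ball x (r x)" D] fine by simp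
    then have fine1: "\<gamma>1 fine D" and fine2: "(\<lambda>x. ball x (r x)) fine D" by auto
    have D': "D tagged_division_of {a..b}" using D by (simp add: cbox_interval)
    have finD: "finite D" using D by blast
    have elem: "\<exists>u v. K = {u..v} \<and> u \<le> x \<and> x \<le> v \<and> Inf K = u \<and> Sup K = v \<and> measure lborel K = v - u \<and> a \<le> u \<and> v \<le> b
        \<and> K \<subseteq> ball x (r x)" if "(x,K) \<in> D" for x K
    proof -
      have "x \<in> K" "K \<subseteq> {a..b}" "\<exists>u v. K = cbox u v" using D' that by blast+
      then obtain u v where "K = {u..v}" "u \<le> x" "x \<le> v" "Inf K = u" "Sup K = v" "measure lborel K = v - u"
        using interval_facts by metis
      moreover have "K \<subseteq> ball x (r x)" using fine2 that by (auto simp: fine_def)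
      ultimately show ?thesis using \<open>K \<subseteq> {a..b}\<close> by auto
    qed
    have sumg: "(\<Sum>(x,K)\<in>D. g (Sup K) - g (Inf K)) = g b - g a"
      using additive_tagged_division_1[OF ab D'] by simp
    have sumc: "(\<Sum>(x,K)\<in>D. Sup K - Inf K) = b - a"
      using additive_tagged_division_1[OF ab D', of "\<lambda>x. x"] by simp
    define D1 where "D1 = {p\<in>D. fst p \<in> N'}"
    define D2 where "D2 = {p\<in>D. fst p \<notin> N'}"
    have D12: "D = D1 \<union> D2" "D1 \<inter> D2 = {}" by (auto simp: D1_def D2_def)
    have finD1: "finite D1" "finite D2" using finD by (auto simp: D1_def D2_def)
    have A: "g (Sup K) - g (Inf K) \<ge> -e * (Sup K - Inf K)" if "(x,K) \<in> D2" for x K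
    proof -
      have xD: "(x,K) \<in> D" "x \<notin> N'" using that by (auto simp: D2_def)
      obtain u v where uv: "K = {u..v}" "u \<le> x" "x \<le> v" "Inf K = u" "Sup K = v" "a \<le> u" "v \<le> b"
        "K \<subseteq> ball x (r x)" using elem[OF xD(1)] by blast
      have xin: "x \<in> {a<..<b} - N'" using xD(2) uv by (auto simp: N'_def)
      have "u \<in> K" "v \<in> K" using uv by auto
      then have du: "dist u x < r x" and dv: "dist v x < r x" using uv(8) by (auto simp: dist_commute)
      have "Q x u" "Q x v" using rQ[OF xin] du dv uv by auto
      then have "g v - g x \<ge> -e*(v-x)" "g x - g u \<ge> -e*(x-u)" using uv by (auto simp: Q_def)
      then show ?thesis using uv by (simp add: algebra_simps)
    qed
    have sum2: "(\<Sum>(x,K)\<in>D2. g (Sup K) - g (Inf K)) \<ge> -e * (b - a)"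
    proof -
      have "(\<Sum>(x,K)\<in>D2. g (Sup K) - g (Inf K)) \<ge> (\<Sum>(x,K)\<in>D2. -e * (Sup K - Inf K))"
        using A by (intro sum_mono) auto
      also have "(\<Sum>(x,K)\<in>D2. -e * (Sup K - Inf K)) = -e * (\<Sum>(x,K)\<in>D2. Sup K - Inf K)"
        by (simp add: sum_distrib_left case_prod_beta)
      also have "(\<Sum>(x,K)\<in>D2. Sup K - Inf K) \<le> (\<Sum>(x,K)\<in>D. Sup K - Inf K)"
      proof (rule sum_mono2[OF finD])
        show "D2 \<subseteq> D" by (auto simp: D2_def)
        show "0 \<le> (case p of (x, K) \<Rightarrow> Sup K - Inf K)" if "p \<in> D - D2" for p
          using that elem by (cases p) fastforce
      qed
      then have "-e * (\<Sum>(x,K)\<in>D2. Sup K - Inf K) \<ge> -e * (b - a)" using sumc e by simp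
      finally show ?thesis by simp
    qed
    define D1' where "D1' = {p\<in>D1. Inf (snd p) < Sup (snd p)}"
    have finD1': "finite D1'" using finD1 by (simp add: D1'_def)
    have s1: "(\<Sum>(x,K)\<in>D1. g (Sup K) - g (Inf K)) = (\<Sum>(x,K)\<in>D1'. g (Sup K) - g (Inf K))"
    proof (rule sum.mono_neutral_right[OF finD1(1)])
      show "D1' \<subseteq> D1" by (auto simp: D1'_def)
      show "\<forall>i\<in>D1 - D1'. (case i of (x, K) \<Rightarrow> g (Sup K) - g (Inf K)) = 0"
      proof
        fix p assume p: "p \<in> D1 - D1'"
        obtain x K where pe: "p = (x,K)" by (cases p)
        then have "(x,K) \<in> D" using p by (auto simp: D1_def)
        then have "Inf K \<le> Sup K" using elem by fastforce
        then have "Inf K = Sup K" using p pe by (auto simp: D1'_def)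
        then show "(case p of (x, K) \<Rightarrow> g (Sup K) - g (Inf K)) = 0" using pe by simp
      qed
    qed
    define F where "F = (\<lambda>(x,K). (Inf K, Sup K)) ` D1'"
    have D1'D: "D1' \<subseteq> D" by (auto simp: D1'_def D1_def)
    have disj: "Sup K \<le> Inf K' \<or> Sup K' \<le> Inf K" if "(x,K) \<in> D1'" "(x',K') \<in> D1'" "(x,K) \<noteq> (x',K')" for x K x' K'
    proof -
      have "(x,K) \<in> D" "(x',K') \<in> D" using that D1'D by auto
      then have i: "interior K \<inter> interior K' = {}" using D that(3) by blast
      obtain u v where uv: "K = {u..v}" "Inf K = u" "Sup K = v" using elem[OF \<open>(x,K) \<in> D\<close>] by blast
      obtain u' v' where uv': "K' = {u'..v'}" "Inf K' = u'" "Sup K' = v'" using elem[OF \<open>(x',K') \<in> D\<close>] by blast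
      have "u < v" "u' < v'" using that uv uv' by (auto simp: D1'_def)
      show ?thesis
      proof (rule ccontr)
        assume "\<not> ?thesis"
        then have "v > u'" "v' > u" using uv uv' by auto
        define z where "z = (max u u' + min v v') / 2"
        have "z \<in> {u<..<v}" "z \<in> {u'<..<v'}" using \<open>u < v\<close> \<open>u' < v'\<close> \<open>v > u'\<close> \<open>v' > u\<close>
          by (auto simp: z_def)
        then show False using i uv uv' by auto
      qed
    qed
    have injF: "inj_on (\<lambda>(x,K). (Inf K, Sup K)) D1'"
    proof (rule inj_onI)
      fix p p' assume p: "p \<in> D1'" "p' \<in> D1'" and eq: "(case p of (x, K) \<Rightarrow> (Inf K, Sup K)) = (case p' of (x, K) \<Rightarrow> (Inf K, Sup K))"
      obtain x K x' K' where pe: "p = (x,K)" "p' = (x',K')" by (cases p, cases p')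
      have lt: "Inf K < Sup K" using p pe by (auto simp: D1'_def)
      show "p = p'"
      proof (rule ccontr)
        assume "p \<noteq> p'"
        then have "Sup K \<le> Inf K' \<or> Sup K' \<le> Inf K" using disj p pe by blast
        then show False using eq pe lt by auto
      qed
    qed
    have c1: "(\<Sum>(x,K)\<in>D1'. Sup K - Inf K) \<le> (\<Sum>(x,K)\<in>D. measure lborel K *\<^sub>R indicat_real N' x)"
    proof -
      have "(\<Sum>(x,K)\<in>D1'. Sup K - Inf K) = (\<Sum>(x,K)\<in>D1'. measure lborel K *\<^sub>R indicat_real N' x)"
      proof (rule sum.cong[OF refl])
        fix p assume p: "p \<in> D1'"
        obtain x K where pe: "p = (x,K)" by (cases p)
        then have "(x,K) \<in> D" "x \<in> N'" using p by (auto simp: D1'_def D1_def)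
        then show "(case p of (x, K) \<Rightarrow> Sup K - Inf K) = (case p of (x, K) \<Rightarrow> measure lborel K *\<^sub>R indicat_real N' x)"
          using elem pe by fastforce
      qed
      also have "\<dots> \<le> (\<Sum>(x,K)\<in>D. measure lborel K *\<^sub>R indicat_real N' x)"
        by (rule sum_mono2[OF finD D1'D]) (auto simp: content_pos_le)
      finally show ?thesis .
    qed
    have c2: "(\<Sum>(x,K)\<in>D. measure lborel K *\<^sub>R indicat_real N' x) < \<delta>"
      using G1[OF D fine1] by simp
    have sF: "(\<Sum>(u,v)\<in>F. v - u) = (\<Sum>(x,K)\<in>D1'. Sup K - Inf K)"
      unfolding F_def by (subst sum.reindex[OF injF]) (simp add: case_prod_beta)
    have sF2: "(\<Sum>(u,v)\<in>F. norm (g v - g u)) = (\<Sum>(x,K)\<in>D1'. norm (g (Sup K) - g (Inf K)))"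
      unfolding F_def by (subst sum.reindex[OF injF]) (simp add: case_prod_beta)
    have "(\<Sum>(u,v)\<in>F. norm (g v - g u)) < e"
    proof (rule AC)
      show "finite F" using finD1' by (simp add: F_def)
      show "\<forall>(u,v)\<in>F. a \<le> u \<and> u \<le> v \<and> v \<le> b"
        using elem D1'D unfolding F_def by fastforce
      show "\<forall>(u,v)\<in>F. \<forall>(u',v')\<in>F. (u,v) \<noteq> (u',v') \<longrightarrow> v \<le> u' \<or> v' \<le> u"
        unfolding F_def using disj by fastforce
      show "(\<Sum>(u,v)\<in>F. v - u) < \<delta>" using sF c1 c2 by simp
    qed
    then have "(\<Sum>(x,K)\<in>D1'. norm (g (Sup K) - g (Inf K))) < e" using sF2 by simp
    moreover have "(\<Sum>(x,K)\<in>D1'. g (Sup K) - g (Inf K)) \<ge> - (\<Sum>(x,K)\<in>D1'. norm (g (Sup K) - g (Inf K)))"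
    proof -
      have "(\<Sum>(x,K)\<in>D1'. - norm (g (Sup K) - g (Inf K))) \<le> (\<Sum>(x,K)\<in>D1'. g (Sup K) - g (Inf K))"
        by (intro sum_mono) (auto simp: case_prod_beta)
      then show ?thesis by (simp add: sum_negf case_prod_beta)
    qed
    ultimately have sum1: "(\<Sum>(x,K)\<in>D1. g (Sup K) - g (Inf K)) > -e" using s1 by simp
    have "g b - g a = (\<Sum>(x,K)\<in>D1. g (Sup K) - g (Inf K)) + (\<Sum>(x,K)\<in>D2. g (Sup K) - g (Inf K))"
      using sumg sum.union_disjoint[OF finD1 D12(2)] D12(1) by metis
    then show ?thesis using sum1 sum2 by (simp add: algebra_simps)
  qed
  show ?thesis
  proof (rule ccontr)
    assume "\<not> g a \<le> g b"
    define e where "e = (g a - g b) / (2 * (1 + (b - a)))"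
    have pos: "1 + (b - a) > 0" using ab by simp
    have "e > 0" using \<open>\<not> g a \<le> g b\<close> pos by (simp add: e_def)
    have "e * (1 + (b - a)) = (g a - g b) / 2" using pos unfolding e_def by (simp add: field_simps)
    with key[OF \<open>e > 0\<close>] have "g a - g b \<le> (g a - g b) / 2" by simp
    then show False using \<open>\<not> g a \<le> g b\<close> by simp
  qed
qed


lemma AC_restrict:
  assumes "abs_continuous_on a b g" "a \<le> c" "d \<le> b"
  shows "abs_continuous_on c d g"
  unfolding abs_continuous_on_def
proof (intro allI impI)
  fix e :: real assume e: "e > 0"
  from assms(1)[unfolded abs_continuous_on_def, rule_format, OF e] obtain \<delta> where d: "\<delta> > 0" and
    H0: "\<forall>(m::nat) (s::nat \<Rightarrow> real) (t::nat \<Rightarrow> real).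
        (\<forall>i<m. a \<le> s i \<and> s i \<le> t i \<and> t i \<le> b) \<and>
        (\<forall>i<m. \<forall>j<m. i \<noteq> j \<longrightarrow> t i \<le> s j \<or> t j \<le> s i) \<and>
        (\<Sum>i<m. t i - s i) < \<delta>
        \<longrightarrow> (\<Sum>i<m. norm (g (t i) - g (s i))) < e" by blast
  show "\<exists>\<delta>>0. \<forall>(m::nat) (s::nat \<Rightarrow> real) (t::nat \<Rightarrow> real).
        (\<forall>i<m. c \<le> s i \<and> s i \<le> t i \<and> t i \<le> d) \<and>
        (\<forall>i<m. \<forall>j<m. i \<noteq> j \<longrightarrow> t i \<le> s j \<or> t j \<le> s i) \<and>
        (\<Sum>i<m. t i - s i) < \<delta>
        \<longrightarrow> (\<Sum>i<m. norm (g (t i) - g (s i))) < e"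
  proof (intro exI[of _ \<delta>] conjI allI impI)
    show "\<delta> > 0" by fact
    fix m :: nat and s t :: "nat \<Rightarrow> real"
    assume A: "(\<forall>i<m. c \<le> s i \<and> s i \<le> t i \<and> t i \<le> d) \<and>
        (\<forall>i<m. \<forall>j<m. i \<noteq> j \<longrightarrow> t i \<le> s j \<or> t j \<le> s i) \<and>
        (\<Sum>i<m. t i - s i) < \<delta>"
    then have "(\<forall>i<m. a \<le> s i \<and> s i \<le> t i \<and> t i \<le> b)" using assms(2,3) by force
    then show "(\<Sum>i<m. norm (g (t i) - g (s i))) < e" using H0 A by blast
  qed
qed

lemma AC_uminus:
  fixes g :: "real \<Rightarrow> 'a::real_normed_vector"
  assumes "abs_continuous_on a b g"
  shows "abs_continuous_on a b (\<lambda>x. - g x)"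
proof -
  have "norm (- g u - - g v) = norm (g u - g v)" for u v
    by (metis minus_diff_eq minus_diff_minus norm_minus_cancel)
  then show ?thesis using assms unfolding abs_continuous_on_def by simp
qed

lemma AC_cont:
  fixes g :: "real \<Rightarrow> 'a::real_normed_vector"
  assumes "abs_continuous_on a b g"
  shows "continuous_on {a..b} g"
  unfolding continuous_on_iff
proof (intro ballI allI impI)
  fix x e :: real assume x: "x \<in> {a..b}" and e: "e > 0"
  from assms[unfolded abs_continuous_on_def, rule_format, OF e] obtain \<delta> where d: "\<delta> > 0" and
    H0: "\<forall>(m::nat) (s::nat \<Rightarrow> real) (t::nat \<Rightarrow> real).
        (\<forall>i<m. a \<le> s i \<and> s i \<le> t i \<and> t i \<le> b) \<and>
        (\<forall>i<m. \<forall>j<m. i \<noteq> j \<longrightarrow> t i \<le> s j \<or> t j \<le> s i) \<and>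
        (\<Sum>i<m. t i - s i) < \<delta>
        \<longrightarrow> (\<Sum>i<m. norm (g (t i) - g (s i))) < e" by blast
  show "\<exists>\<delta>>0. \<forall>x'\<in>{a..b}. dist x' x < \<delta> \<longrightarrow> dist (g x') (g x) < e"
  proof (intro exI conjI ballI impI)
    show "\<delta> > 0" by fact
    fix x' assume x': "x' \<in> {a..b}" "dist x' x < \<delta>"
    have "(\<Sum>i<1::nat. norm (g ((\<lambda>_. max x x') i) - g ((\<lambda>_. min x x') i))) < e"
    proof -
      have "max x x' - min x x' < \<delta>" using x' by (auto simp: dist_real_def max_def min_def)
      then show ?thesis using H0[rule_format, of 1 "\<lambda>_. min x x'" "\<lambda>_. max x x'"] x x' by auto
    qed
    then have "norm (g (max x x') - g (min x x')) < e" by simp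
    then show "dist (g x') (g x) < e"
      by (cases "x \<le> x'") (auto simp: dist_norm max_def min_def norm_minus_commute)
  qed
qed

lemma AC_comp:
  fixes G :: "'a::euclidean_space \<Rightarrow> 'b::real_normed_vector"
    and y :: "real \<Rightarrow> 'a"
  assumes ac: "abs_continuous_on a b y" and ab: "a \<le> b"
    and der: "\<And>z. (G has_derivative G' z) (at z)"
    and bnd: "\<And>z h. norm (G' z h) \<le> \<beta> z * norm h"
    and cb: "continuous_on UNIV \<beta>"
  shows "abs_continuous_on a b (\<lambda>t. G (y t))"
proof -
  have "compact (y ` {a..b})" using AC_cont[OF ac] by (intro compact_continuous_image) auto
  then obtain R where R: "R > 0" "\<And>z. z \<in> y ` {a..b} \<Longrightarrow> norm z \<le> R"
    using compact_imp_bounded bounded_pos by metis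
  have "compact (\<beta> ` cball 0 R)" using cb by (intro compact_continuous_image) (auto intro: continuous_on_subset compact_cball)
  then obtain B0 where B0: "\<And>z. z \<in> cball 0 R \<Longrightarrow> norm (\<beta> z) \<le> B0"
    using compact_imp_bounded bounded_iff by (metis imageI)
  define B where "B = max B0 0 + 1"
  have Bpos: "B > 0" by (simp add: B_def)
  have onb: "onorm (G' z) \<le> B" if "z \<in> cball 0 R" for z
  proof (rule onorm_le)
    fix h :: 'a
    have "\<beta> z \<le> B" using B0[OF that] by (simp add: B_def)
    then have "\<beta> z * norm h \<le> B * norm h" by (simp add: mult_right_mono)
    then show "norm (G' z h) \<le> B * norm h" using bnd[of z h] by simp
  qed
  have lip: "norm (G z - G w) \<le> B * norm (z - w)" if "z \<in> cball 0 R" "w \<in> cball 0 R" for z w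
    by (rule differentiable_bound[OF convex_cball _ onb that]) (auto intro: has_derivative_at_withinI der)
  have yin: "t \<in> {a..b} \<Longrightarrow> y t \<in> cball 0 R" for t using R(2) by auto
  show ?thesis
    unfolding abs_continuous_on_def
  proof (intro allI impI)
    fix e :: real assume e: "e > 0"
    then have "e / B > 0" using Bpos by simp
    from ac[unfolded abs_continuous_on_def, rule_format, OF this] obtain \<delta> where d: "\<delta> > 0" and
      H0: "\<forall>(m::nat) (s::nat \<Rightarrow> real) (t::nat \<Rightarrow> real).
          (\<forall>i<m. a \<le> s i \<and> s i \<le> t i \<and> t i \<le> b) \<and>
          (\<forall>i<m. \<forall>j<m. i \<noteq> j \<longrightarrow> t i \<le> s j \<or> t j \<le> s i) \<and>
          (\<Sum>i<m. t i - s i) < \<delta>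
          \<longrightarrow> (\<Sum>i<m. norm (y (t i) - y (s i))) < e / B" by blast
    show "\<exists>\<delta>>0. \<forall>(m::nat) (s::nat \<Rightarrow> real) (t::nat \<Rightarrow> real).
          (\<forall>i<m. a \<le> s i \<and> s i \<le> t i \<and> t i \<le> b) \<and>
          (\<forall>i<m. \<forall>j<m. i \<noteq> j \<longrightarrow> t i \<le> s j \<or> t j \<le> s i) \<and>
          (\<Sum>i<m. t i - s i) < \<delta>
          \<longrightarrow> (\<Sum>i<m. norm (G (y (t i)) - G (y (s i)))) < e"
    proof (intro exI conjI allI impI)
      show "\<delta> > 0" by fact
      fix m :: nat and s t :: "nat \<Rightarrow> real"
      assume A: "(\<forall>i<m. a \<le> s i \<and> s i \<le> t i \<and> t i \<le> b) \<and>
          (\<forall>i<m. \<forall>j<m. i \<noteq> j \<longrightarrow> t i \<le> s j \<or> t j \<le> s i) \<and>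
          (\<Sum>i<m. t i - s i) < \<delta>"
      have "(\<Sum>i<m. norm (G (y (t i)) - G (y (s i)))) \<le> (\<Sum>i<m. B * norm (y (t i) - y (s i)))"
      proof (rule sum_mono)
        fix i assume "i \<in> {..<m}"
        then have "s i \<in> {a..b}" "t i \<in> {a..b}" using A by auto
        then show "norm (G (y (t i)) - G (y (s i))) \<le> B * norm (y (t i) - y (s i))"
          using lip yin by blast
      qed
      also have "\<dots> = B * (\<Sum>i<m. norm (y (t i) - y (s i)))" by (simp add: sum_distrib_left)
      also have "\<dots> < B * (e / B)" using H0[rule_format, OF A] Bpos by (intro mult_strict_left_mono) auto
      also have "\<dots> = e" using Bpos by simp
      finally show "(\<Sum>i<m. norm (G (y (t i)) - G (y (s i)))) < e" .
    qed
  qed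
qed

lemma AC_barrier:
  fixes G :: "real \<Rightarrow> real"
  assumes ac: "abs_continuous_on 0 T G" and N: "negligible N"
    and der: "\<And>x. x \<in> {0<..<T} \<Longrightarrow> x \<notin> N \<Longrightarrow> G x > 0 \<Longrightarrow> \<exists>d\<le>0. (G has_real_derivative d) (at x)"
    and G0: "G 0 \<le> 0"
  shows "\<forall>\<tau>\<in>{0..T}. G \<tau> \<le> 0"
proof (rule ballI, rule ccontr)
  fix \<tau>1 assume t1: "\<tau>1 \<in> {0..T}" and pos: "\<not> G \<tau>1 \<le> 0"
  have cont: "continuous_on {0..\<tau>1} G" using AC_cont[OF ac] t1 by (auto intro: continuous_on_subset)
  define S where "S = {0..\<tau>1} \<inter> G -` {..0}"
  have cS: "closed S" unfolding S_def by (rule continuous_closed_preimage[OF cont]) auto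
  have "0 \<in> S" using G0 t1 by (auto simp: S_def)
  then have neS: "S \<noteq> {}" by auto
  have bS: "bdd_above S" by (auto simp: S_def bdd_above_def)
  define s where "s = Sup S"
  have sS: "s \<in> S" using closed_contains_Sup[OF neS bS cS] by (simp add: s_def)
  have above: "x \<le> s" if "x \<in> S" for x using cSup_upper[OF that bS] by (simp add: s_def)
  have s1: "0 \<le> s" "s \<le> \<tau>1" "G s \<le> 0" using sS by (auto simp: S_def)
  then have "s \<noteq> \<tau>1" using pos by auto
  with s1 have slt: "s < \<tau>1" by simp
  have Gpos: "G x > 0" if "x \<in> {s<..\<tau>1}" for x
  proof (rule ccontr)
    assume "\<not> G x > 0"
    then have "x \<in> S" using that s1 by (auto simp: S_def)
    then show False using above that by force
  qed
  have "(\<lambda>x. - G x) s \<le> (\<lambda>x. - G x) \<tau>1"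
  proof (rule AC_mono[of s \<tau>1 "\<lambda>x. - G x" N, OF _ _ N])
    show "s \<le> \<tau>1" using slt by simp
    show "abs_continuous_on s \<tau>1 (\<lambda>x. - G x)"
      using AC_uminus[OF AC_restrict[OF ac]] s1 t1 by auto
    fix x assume x: "x \<in> {s<..<\<tau>1}" "x \<notin> N"
    then have "x \<in> {0<..<T}" using s1 t1 by auto
    then obtain d where "d \<le> 0" and dG: "(G has_real_derivative d) (at x)" using der x Gpos by force
    have "((\<lambda>x. - G x) has_real_derivative - d) (at x within {s..\<tau>1})"
      using DERIV_minus[OF has_field_derivative_at_within[OF dG]] by simp
    then show "\<exists>d\<ge>0. ((\<lambda>x. - G x) has_real_derivative d) (at x within {s..\<tau>1})"
      using \<open>d \<le> 0\<close> by (intro exI[of _ "-d"]) auto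
  qed
  then show False using s1 pos by simp
qed



lemma spd_inv_pos:
  fixes A :: "real^'n^'n"
  assumes "sym_pos_def A" "z \<noteq> 0"
  shows "z \<bullet> (matrix_inv A *v z) > 0"
proof -
  have pd: "\<And>w. w \<noteq> 0 \<Longrightarrow> w \<bullet> (A *v w) > 0" using assms(1) by (simp add: sym_pos_def_def)
  have "\<forall>x. A *v x = 0 \<longrightarrow> x = 0"
  proof (intro allI impI)
    fix x assume "A *v x = 0"
    then show "x = 0" using pd[of x] by (cases "x = 0") auto
  qed
  then obtain B :: "real^'n^'n" where "B ** A = mat 1" using matrix_left_invertible_ker by blast
  then have "A ** B = mat 1 \<and> B ** A = mat 1" using matrix_left_right_inverse by blast
  then have "\<exists>A'. A ** A' = mat 1 \<and> A' ** A = mat 1" by blast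
  then have AB: "A ** matrix_inv A = mat 1"
    unfolding matrix_inv_def by (rule someI2_ex) blast
  define w where "w = matrix_inv A *v z"
  have Aw: "A *v w = z" unfolding w_def by (simp add: matrix_vector_mul_assoc AB)
  then have "w \<noteq> 0" using assms(2) by auto
  then have "w \<bullet> (A *v w) > 0" using pd by blast
  then show ?thesis using Aw by (simp add: w_def inner_commute)
qed

lemma vec_sum_axis: "(\<Sum>i\<in>UNIV. c i *\<^sub>R axis i (1::real)) = (\<chi> i. c i)"
  by (simp add: vec_eq_iff sum_component axis_def if_distrib[where f="\<lambda>z. _ * z"] sum.delta cong: if_cong)

lemma C2_nvec:
  fixes fc :: "real^'n \<Rightarrow> real"
  assumes "C2_fun fc"
  obtains Dn :: "real^'n \<Rightarrow> real^'n \<Rightarrow> real^'n" and \<beta> :: "real^'n \<Rightarrow> real"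
  where "\<And>q. (nvec fc has_derivative Dn q) (at q)" "\<And>q h. norm (Dn q h) \<le> \<beta> q * norm h"
    "continuous_on UNIV \<beta>" "\<And>q. (fc has_derivative (\<lambda>h. nvec fc q \<bullet> h)) (at q)"
proof -
  obtain f' :: "real^'n \<Rightarrow> ((real^'n) \<Rightarrow>\<^sub>L real)" and f'' where
    d1: "\<And>x. (fc has_derivative blinfun_apply (f' x)) (at x)" and
    d2: "\<And>x. (f' has_derivative blinfun_apply (f'' x)) (at x)" and c2: "continuous_on UNIV f''"
    using assms unfolding C2_fun_def C1_fun_def by blast
  have nv: "nvec fc q = (\<chi> i. f' q (axis i 1))" for q
    unfolding nvec_def gradient_def using frechet_derivative_at[OF d1[of q]] by simp
  define Dn where "Dn q h = (\<chi> i. f'' q h (axis i 1))" for q h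
  define \<beta> where "\<beta> q = real CARD('n) * norm (f'' q)" for q
  have nv2: "nvec fc = (\<lambda>q. \<Sum>i\<in>UNIV. f' q (axis i 1) *\<^sub>R axis i (1::real))"
    by (rule ext) (simp add: nv vec_sum_axis)
  have Dn2: "Dn q = (\<lambda>h. \<Sum>i\<in>UNIV. f'' q h (axis i 1) *\<^sub>R axis i (1::real))" for q
    by (rule ext) (simp add: Dn_def vec_sum_axis)
  have comp: "((\<lambda>q. blinfun_apply (f' q) (axis i 1)) has_derivative (\<lambda>h. blinfun_apply (f'' q h) (axis i 1))) (at q)" for q i
    using blinfun.FDERIV[OF d2[of q] has_derivative_const[of "axis i 1"]] by simp
  have D: "(nvec fc has_derivative Dn q) (at q)" for q
    unfolding nv2 Dn2
    by (intro has_derivative_sum has_derivative_scaleR_left comp)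
  have B: "norm (Dn q h) \<le> \<beta> q * norm h" for q h
  proof -
    have "norm (Dn q h) \<le> (\<Sum>i\<in>UNIV. norm (f'' q h (axis i 1) *\<^sub>R axis i (1::real)))"
      unfolding Dn2 by (rule norm_sum)
    also have "\<dots> \<le> (\<Sum>i\<in>(UNIV::'n set). norm (f'' q) * norm h)"
    proof (rule sum_mono)
      fix i :: 'n
      have "norm (f'' q h (axis i 1)) \<le> norm (f'' q h) * norm (axis i (1::real))" by (rule norm_blinfun)
      also have "\<dots> = norm (f'' q h)" by simp
      also have "\<dots> \<le> norm (f'' q) * norm h" by (rule norm_blinfun)
      finally show "norm (f'' q h (axis i 1) *\<^sub>R axis i (1::real)) \<le> norm (f'' q) * norm h"
        by simp
    qed
    also have "\<dots> = \<beta> q * norm h" by (simp add: \<beta>_def)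
    finally show ?thesis .
  qed
  have C: "continuous_on UNIV \<beta>" unfolding \<beta>_def
    by (intro continuous_intros c2)
  have F: "(fc has_derivative (\<lambda>h. nvec fc q \<bullet> h)) (at q)" for q
  proof -
    have "blinfun_apply (f' q) h = nvec fc q \<bullet> h" for h
    proof -
      have eq: "h = (\<Sum>i\<in>UNIV. (h $ i) *\<^sub>R axis i (1::real))" by (simp add: vec_sum_axis)
      have "blinfun_apply (f' q) h = blinfun_apply (f' q) (\<Sum>i\<in>UNIV. (h $ i) *\<^sub>R axis i (1::real))"
        by (rule arg_cong[OF eq])
      also have "\<dots> = (\<Sum>i\<in>UNIV. blinfun_apply (f' q) ((h $ i) *\<^sub>R axis i (1::real)))"
        by (rule blinfun.sum_right)
      also have "\<dots> = (\<Sum>i\<in>UNIV. (h $ i) * f' q (axis i 1))"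
        by (simp add: blinfun.scaleR_right)
      also have "\<dots> = nvec fc q \<bullet> h" by (simp add: nv inner_vec_def mult.commute)
      finally show ?thesis .
    qed
    then show ?thesis using d1[of q] by (metis (no_types, lifting) ext)
  qed
  show ?thesis using that[OF D B C F] .
qed



lemma chain_real:
  fixes G :: "'a::real_normed_vector \<Rightarrow> real"
  assumes "(y has_vector_derivative d) (at \<tau>)" "(G has_derivative G') (at (y \<tau>))"
  shows "((\<lambda>t. G (y t)) has_real_derivative G' d) (at \<tau>)"
proof -
  have "((\<lambda>t. G (y t)) has_derivative (\<lambda>x. G' (x *\<^sub>R d))) (at \<tau>)"
    using has_derivative_compose[OF assms(1)[unfolded has_vector_derivative_def] assms(2)] .
  moreover have "(\<lambda>x. G' (x *\<^sub>R d)) = (*) (G' d)"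
    using linear_cmul[OF has_derivative_linear[OF assms(2)]] by (auto simp: mult.commute)
  ultimately show ?thesis by (simp add: has_field_derivative_def)
qed



theorem theorem1:
  fixes fv :: "real^'n \<Rightarrow> real^'n \<Rightarrow> real^'m \<Rightarrow> real^'n"
    and M :: "real^'n \<Rightarrow> real^'n^'n"
    and fc :: "real^'n \<Rightarrow> real"
    and an tf :: real
    and u :: "real \<Rightarrow> real^'m"
    and y :: "real \<Rightarrow> (real^'n) \<times> (real^'n) \<times> real"
  assumes fv_C2: "C2_fun (\<lambda>(q, v, w). fv q v w)"
    and M_C2: "C2_fun M"
    and fc_C2: "C2_fun fc"
    and M_spd: "\<forall>q. sym_pos_def (M q)"
    and regular: "\<forall>q. fc q = 0 \<longrightarrow> nvec fc q \<noteq> 0"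
    and an_pos: "an > 0"
    and sol: "TF_solution fv M fc an u tf y"
    and init: "y 0 \<in> Sigma_set fc"
    and persistent: "\<forall>\<tau>\<in>{0..tf}. phi fv fc (fst (y \<tau>)) (fst (snd (y \<tau>))) (u \<tau>) \<le> 0"
  shows "(\<forall>\<tau>\<in>{0..tf}. y \<tau> \<in> Sigma_set fc
            \<and> 0 < gamma fv M fc an (fst (y \<tau>)) (fst (snd (y \<tau>))) (u \<tau>)
            \<and> gamma fv M fc an (fst (y \<tau>)) (fst (snd (y \<tau>))) (u \<tau>) \<le> 1)
       \<and> (AE \<tau> in lborel. \<tau> \<in> {0..tf} \<longrightarrow>
            (\<exists>!\<theta>. TF_mult fc (y \<tau>) \<theta> \<and>
                 vector_derivative y (at \<tau> within {0..tf})
                   = fst \<theta> *\<^sub>R f1 fv (y \<tau>) (u \<tau>) + snd \<theta> *\<^sub>R f2 M fc an (y \<tau>))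
          \<and> (y has_vector_derivative
                gamma fv M fc an (fst (y \<tau>)) (fst (snd (y \<tau>))) (u \<tau>) *\<^sub>R
                  (fst (fDAE fv M fc (fst (y \<tau>)) (fst (snd (y \<tau>))) (u \<tau>)),
                   snd (fDAE fv M fc (fst (y \<tau>)) (fst (snd (y \<tau>))) (u \<tau>)), 1))
              (at \<tau> within {0..tf}))"
proof (cases "tf < 0")
  case True
  then show ?thesis by simp
next
  case False
  then have tf0: "0 \<le> tf" by simp
  obtain Dn \<beta> where nD: "\<And>q. (nvec fc has_derivative Dn q) (at q)"
    and nB: "\<And>q h. norm (Dn q h) \<le> \<beta> q * norm h" and nC: "continuous_on UNIV \<beta>"
    and fD: "\<And>q. (fc has_derivative (\<lambda>h. nvec fc q \<bullet> h)) (at q)"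
    using C2_nvec[OF fc_C2] by blast
  have ncont: "continuous_on UNIV (nvec fc)"
    using nD by (intro continuous_at_imp_continuous_on ballI has_derivative_continuous) blast
  define G1 :: "(real^'n) \<times> (real^'n) \<times> real \<Rightarrow> real" where "G1 Y = fc (fst Y)" for Y
  define G2 :: "(real^'n) \<times> (real^'n) \<times> real \<Rightarrow> real" where "G2 Y = nvec fc (fst Y) \<bullet> fst (snd Y)" for Y
  define G1' :: "(real^'n) \<times> (real^'n) \<times> real \<Rightarrow> (real^'n) \<times> (real^'n) \<times> real \<Rightarrow> real"
    where "G1' Y H = nvec fc (fst Y) \<bullet> fst H" for Y H
  define G2' :: "(real^'n) \<times> (real^'n) \<times> real \<Rightarrow> (real^'n) \<times> (real^'n) \<times> real \<Rightarrow> real"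
    where "G2' Y H = nvec fc (fst Y) \<bullet> fst (snd H) + Dn (fst Y) (fst H) \<bullet> fst (snd Y)" for Y H
  have dG1: "(G1 has_derivative G1' Y) (at Y)" for Y
  proof -
    have "((\<lambda>Y. fc (fst Y)) has_derivative (\<lambda>H. nvec fc (fst Y) \<bullet> fst H)) (at Y)"
      by (rule has_derivative_compose[OF has_derivative_fst[OF has_derivative_ident] fD])
    then show ?thesis by (simp add: G1_def[abs_def] G1'_def[abs_def])
  qed
  have dG2: "(G2 has_derivative G2' Y) (at Y)" for Y
  proof -
    have a: "((\<lambda>Y. nvec fc (fst Y)) has_derivative (\<lambda>H. Dn (fst Y) (fst H))) (at Y)"
      by (rule has_derivative_compose[OF has_derivative_fst[OF has_derivative_ident] nD])
    have b: "((\<lambda>Y::(real^'n) \<times> (real^'n) \<times> real. fst (snd Y)) has_derivative (\<lambda>H. fst (snd H))) (at Y)"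
      by (intro has_derivative_fst has_derivative_snd has_derivative_ident)
    show ?thesis using has_derivative_inner[OF a b]
      by (simp add: G2_def[abs_def] G2'_def[abs_def])
  qed
  have bpos: "\<beta> q \<ge> 0" for q
  proof -
    have "0 \<le> \<beta> q * norm (axis undefined (1::real) :: real^'n)"
      using nB[of q "axis undefined 1"] norm_ge_zero order_trans by blast
    then show ?thesis by (simp add: zero_le_mult_iff)
  qed
  have nB2: "norm (Dn q (fst H)) \<le> \<beta> q * norm H" for q and H :: "(real^'n) \<times> (real^'n) \<times> real"
  proof -
    have "norm (fst H) \<le> norm H" by (metis norm_fst_le prod.collapse)
    then show ?thesis using nB[of q "fst H"] bpos[of q] by (meson mult_left_mono order_trans)
  qed
  have bG1: "norm (G1' Y H) \<le> norm (nvec fc (fst Y)) * norm H" for Y H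
  proof -
    have "norm (G1' Y H) \<le> norm (nvec fc (fst Y)) * norm (fst H)"
      unfolding G1'_def by (simp add: Cauchy_Schwarz_ineq2)
    also have "\<dots> \<le> norm (nvec fc (fst Y)) * norm H"
      by (intro mult_left_mono) (auto, metis norm_fst_le prod.collapse)
    finally show ?thesis .
  qed
  have bG2: "norm (G2' Y H) \<le> (norm (nvec fc (fst Y)) + \<beta> (fst Y) * norm (fst (snd Y))) * norm H" for Y H
  proof -
    have h1: "norm (fst H) \<le> norm H" by (metis norm_fst_le prod.collapse)
    have h2: "norm (fst (snd H)) \<le> norm H"
      by (metis norm_fst_le norm_snd_le prod.collapse order_trans)
    have "norm (G2' Y H) \<le> norm (nvec fc (fst Y) \<bullet> fst (snd H)) + norm (Dn (fst Y) (fst H) \<bullet> fst (snd Y))"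
      unfolding G2'_def by (rule norm_triangle_ineq)
    also have "\<dots> \<le> norm (nvec fc (fst Y)) * norm (fst (snd H)) + norm (Dn (fst Y) (fst H)) * norm (fst (snd Y))"
      by (intro add_mono) (simp_all add: Cauchy_Schwarz_ineq2)
    also have "\<dots> \<le> norm (nvec fc (fst Y)) * norm H + (\<beta> (fst Y) * norm H) * norm (fst (snd Y))"
      by (intro add_mono mult_left_mono mult_right_mono h2 nB2) auto
    also have "\<dots> = (norm (nvec fc (fst Y)) + \<beta> (fst Y) * norm (fst (snd Y))) * norm H"
      by (simp add: algebra_simps)
    finally show ?thesis .
  qed
  have cb1: "continuous_on UNIV (\<lambda>Y::(real^'n) \<times> (real^'n) \<times> real. norm (nvec fc (fst Y)))"
    by (intro continuous_intros continuous_on_compose2[OF ncont]) auto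
  have cb2: "continuous_on UNIV (\<lambda>Y::(real^'n) \<times> (real^'n) \<times> real. norm (nvec fc (fst Y)) + \<beta> (fst Y) * norm (fst (snd Y)))"
    by (intro continuous_intros continuous_on_compose2[OF ncont] continuous_on_compose2[OF nC]) auto
  have acy: "abs_continuous_on 0 tf y" using sol by (simp add: TF_solution_def)
  define g1 where "g1 t = G1 (y t)" for t
  define g2 where "g2 t = G2 (y t)" for t
  have ac1: "abs_continuous_on 0 tf g1"
    unfolding g1_def[abs_def] by (rule AC_comp[OF acy tf0 dG1 bG1 cb1])
  have ac2: "abs_continuous_on 0 tf g2"
    unfolding g2_def[abs_def] by (rule AC_comp[OF acy tf0 dG2 bG2 cb2])
  have contG1: "continuous_on UNIV G1"
    using dG1 by (intro continuous_at_imp_continuous_on ballI has_derivative_continuous) blast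
  have contG2: "continuous_on UNIV G2"
    using dG2 by (intro continuous_at_imp_continuous_on ballI has_derivative_continuous) blast
  have cl1: "G1 Y \<ge> 0 \<or> G2 Y \<ge> 0" if "Y \<in> closure (R1 fc)" for Y
  proof -
    have "closure (R1 fc) \<subseteq> {Y. 0 \<le> G1 Y} \<union> {Y. 0 \<le> G2 Y}"
    proof (rule closure_minimal)
      show "R1 fc \<subseteq> {Y. 0 \<le> G1 Y} \<union> {Y. 0 \<le> G2 Y}"
        by (auto simp: R1_def c1_def c2_def G1_def G2_def)
      show "closed ({Y. 0 \<le> G1 Y} \<union> {Y. 0 \<le> G2 Y})"
        by (intro closed_Un closed_Collect_le contG1 contG2 continuous_on_const)
    qed
    then show ?thesis using that by blast
  qed
  have cl2: "G1 Y \<le> 0 \<and> G2 Y \<le> 0" if "Y \<in> closure (R2 fc)" for Y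
  proof -
    have "closure (R2 fc) \<subseteq> {Y. G1 Y \<le> 0} \<inter> {Y. G2 Y \<le> 0}"
    proof (rule closure_minimal)
      show "R2 fc \<subseteq> {Y. G1 Y \<le> 0} \<inter> {Y. G2 Y \<le> 0}"
        by (auto simp: R2_def c1_def c2_def G1_def G2_def)
      show "closed ({Y. G1 Y \<le> 0} \<inter> {Y. G2 Y \<le> 0})"
        by (intro closed_Int closed_Collect_le contG1 contG2 continuous_on_const)
    qed
    then show ?thesis using that by blast
  qed
  define ph where "ph t = phi fv fc (fst (y t)) (fst (snd (y t))) (u t)" for t
  define DD where "DD t = Dq M fc (fst (y t))" for t
  have DDpos: "DD t > 0" if "g1 t = 0" for t
  proof -
    have "nvec fc (fst (y t)) \<noteq> 0" using regular that by (simp add: g1_def G1_def)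
    then show ?thesis using spd_inv_pos[OF M_spd[rule_format, of "fst (y t)"]] by (simp add: DD_def Dq_def)
  qed
  have phi_eq: "phi fv fc q v w = nvec fc q \<bullet> fv q v w + Dn q v \<bullet> v" for q v w
  proof -
    have "((\<lambda>p. nvec fc p \<bullet> v) has_derivative (\<lambda>h. Dn q h \<bullet> v)) (at q)"
      by (rule has_derivative_inner_left[OF nD])
    from frechet_derivative_at[OF this] show ?thesis
      by (simp add: phi_def) (metis (mono_tags, lifting))
  qed
  from sol have "AE \<tau> in lborel. \<tau> \<in> {0..tf} \<longrightarrow>
        (\<exists>d. (y has_vector_derivative d) (at \<tau> within {0..tf}) \<and> d \<in> F_TF fv M fc an (y \<tau>) (u \<tau>))"
    by (simp add: TF_solution_def)
  then obtain N where N1: "\<And>x. x \<in> space lborel - N \<Longrightarrow> x \<in> {0..tf} \<longrightarrow>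
        (\<exists>d. (y has_vector_derivative d) (at x within {0..tf}) \<and> d \<in> F_TF fv M fc an (y x) (u x))"
    and Nnull: "N \<in> null_sets lborel"
    by (rule AE_E3) blast
  have negN: "negligible N" using Nnull by (simp add: negligible_iff_null_sets null_sets_completionI)
  have good: "\<exists>t1 t2 d. t1 \<ge> 0 \<and> t2 \<ge> 0 \<and> t1 + t2 = 1 \<and> (t1 > 0 \<longrightarrow> g1 x \<ge> 0 \<or> g2 x \<ge> 0)
      \<and> (t2 > 0 \<longrightarrow> g1 x \<le> 0 \<and> g2 x \<le> 0)
      \<and> (g1 has_real_derivative t1 * g2 x) (at x)
      \<and> (g2 has_real_derivative t1 * ph x + t2 * an * DD x) (at x)
      \<and> (y has_vector_derivative d) (at x) \<and> TF_mult fc (y x) (t1, t2)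
      \<and> d = t1 *\<^sub>R f1 fv (y x) (u x) + t2 *\<^sub>R f2 M fc an (y x)"
    if x: "x \<in> {0<..<tf}" "x \<notin> N" for x
  proof -
    have atx: "at x within {0..tf} = at x" using x by (simp add: at_within_Icc_at)
    obtain d where dy: "(y has_vector_derivative d) (at x)" and dF: "d \<in> F_TF fv M fc an (y x) (u x)"
      using N1[of x] x atx by auto
    obtain \<theta> where th: "TF_mult fc (y x) \<theta>" and dth: "d = fst \<theta> *\<^sub>R f1 fv (y x) (u x) + snd \<theta> *\<^sub>R f2 M fc an (y x)"
      using dF by (auto simp: F_TF_def)
    define t1 where "t1 = fst \<theta>"
    define t2 where "t2 = snd \<theta>"
    have tt: "t1 \<ge> 0" "t2 \<ge> 0" "t1 + t2 = 1" using th by (auto simp: TF_mult_def t1_def t2_def)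
    have c1': "t1 > 0 \<longrightarrow> g1 x \<ge> 0 \<or> g2 x \<ge> 0"
      using th cl1[of "y x"] by (auto simp: TF_mult_def t1_def g1_def g2_def)
    have c2': "t2 > 0 \<longrightarrow> g1 x \<le> 0 \<and> g2 x \<le> 0"
      using th cl2[of "y x"] by (auto simp: TF_mult_def t2_def g1_def g2_def)
    define q where "q = fst (y x)"
    define v where "v = fst (snd (y x))"
    have d1: "fst d = t1 *\<^sub>R v"
      by (simp add: dth f1_def f2_def t1_def v_def)
    have d2: "fst (snd d) = t1 *\<^sub>R fv q v (u x) + t2 *\<^sub>R (an *\<^sub>R (matrix_inv (M q) *v nvec fc q))"
      by (simp add: dth f1_def f2_def t1_def t2_def v_def q_def)
    have lin: "Dn q (t1 *\<^sub>R v) = t1 *\<^sub>R Dn q v"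
      using linear_cmul[OF has_derivative_linear[OF nD[of q]]] .
    have e1: "G1' (y x) d = t1 * g2 x"
      by (simp add: G1'_def d1 g2_def G2_def q_def v_def)
    have e2: "G2' (y x) d = t1 * ph x + t2 * an * DD x"
      by (simp add: G2'_def d1 d2 lin ph_def DD_def phi_eq Dq_def q_def[symmetric] v_def[symmetric]
          inner_add_right algebra_simps)
    have D1: "(g1 has_real_derivative t1 * g2 x) (at x)"
      using chain_real[OF dy dG1] e1 unfolding g1_def[abs_def] by simp
    have D2: "(g2 has_real_derivative t1 * ph x + t2 * an * DD x) (at x)"
      using chain_real[OF dy dG2] e2 unfolding g2_def[abs_def] by simp
    have "TF_mult fc (y x) (t1, t2)" using th by (simp add: t1_def t2_def)
    moreover have "d = t1 *\<^sub>R f1 fv (y x) (u x) + t2 *\<^sub>R f2 M fc an (y x)" using dth by (simp add: t1_def t2_def)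
    ultimately show ?thesis using tt c1' c2' D1 D2 dy by blast
  qed
  have A: "\<forall>\<tau>\<in>{0..tf}. g2 \<tau> \<le> 0"
  proof (rule AC_barrier[OF ac2 negN])
    show "g2 0 \<le> 0" using init by (simp add: Sigma_set_def g2_def G2_def)
    fix x assume x: "x \<in> {0<..<tf}" "x \<notin> N" "g2 x > 0"
    then obtain t1 t2 d where G: "t1 \<ge> 0" "t2 \<ge> 0" "t1 + t2 = 1" "t2 > 0 \<longrightarrow> g1 x \<le> 0 \<and> g2 x \<le> 0"
      "(g2 has_real_derivative t1 * ph x + t2 * an * DD x) (at x)" using good by blast
    then have "t2 = 0" "t1 = 1" using x by auto
    moreover have "ph x \<le> 0" using persistent x by (simp add: ph_def)
    ultimately show "\<exists>d\<le>0. (g2 has_real_derivative d) (at x)" using G(5) by auto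
  qed
  have B: "\<forall>\<tau>\<in>{0..tf}. - g1 \<tau> \<le> 0"
  proof (rule AC_barrier[OF AC_uminus[OF ac1] negN])
    show "- g1 0 \<le> 0" using init by (simp add: Sigma_set_def g1_def G1_def)
    fix x assume x: "x \<in> {0<..<tf}" "x \<notin> N" "- g1 x > 0"
    then obtain t1 t2 d where G: "t1 \<ge> 0" "t1 > 0 \<longrightarrow> g1 x \<ge> 0 \<or> g2 x \<ge> 0"
      "(g1 has_real_derivative t1 * g2 x) (at x)" using good by blast
    have "t1 * g2 x \<ge> 0" using G(1,2) x by (cases "t1 > 0") auto
    then show "\<exists>d\<le>0. ((\<lambda>x. - g1 x) has_real_derivative d) (at x)"
      using DERIV_minus[OF G(3)] by (intro exI[of _ "- (t1 * g2 x)"]) auto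
  qed
  have C: "\<forall>\<tau>\<in>{0..tf}. g1 \<tau> \<le> 0"
  proof (rule AC_barrier[OF ac1 negN])
    show "g1 0 \<le> 0" using init by (simp add: Sigma_set_def g1_def G1_def)
    fix x assume x: "x \<in> {0<..<tf}" "x \<notin> N" "g1 x > 0"
    then obtain t1 t2 d where G: "t1 \<ge> 0" "(g1 has_real_derivative t1 * g2 x) (at x)" using good by blast
    have "g2 x \<le> 0" using A x by auto
    then have "t1 * g2 x \<le> 0" using G(1) by (simp add: mult_nonneg_nonpos)
    then show "\<exists>d\<le>0. (g1 has_real_derivative d) (at x)" using G(2) by blast
  qed
  have g1z: "g1 \<tau> = 0" if "\<tau> \<in> {0..tf}" for \<tau> using B C that by force
  have locz: "l = 0" if "x \<in> {0<..<tf}" "(g has_real_derivative l) (at x)" "\<And>\<tau>. \<tau> \<in> {0..tf} \<Longrightarrow> g \<tau> = 0" for g l x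
  proof (rule DERIV_local_const[OF that(2)])
    show "0 < min x (tf - x)" using that(1) by auto
    show "\<forall>z. \<bar>x - z\<bar> < min x (tf - x) \<longrightarrow> g x = g z"
    proof (intro allI impI)
      fix z assume "\<bar>x - z\<bar> < min x (tf - x)"
      then have "z \<in> {0..tf}" by auto
      then show "g x = g z" using that(1,3) by auto
    qed
  qed
  have D: "\<forall>\<tau>\<in>{0..tf}. - g2 \<tau> \<le> 0"
  proof (rule AC_barrier[OF AC_uminus[OF ac2] negN])
    show "- g2 0 \<le> 0" using init by (simp add: Sigma_set_def g2_def G2_def)
    fix x assume x: "x \<in> {0<..<tf}" "x \<notin> N" "- g2 x > 0"
    then obtain t1 t2 d where G: "t1 \<ge> 0" "t2 \<ge> 0" "t1 + t2 = 1"
      "(g1 has_real_derivative t1 * g2 x) (at x)"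
      "(g2 has_real_derivative t1 * ph x + t2 * an * DD x) (at x)" using good by blast
    have "t1 * g2 x = 0" using locz[OF x(1) G(4)] g1z by blast
    then have "t1 = 0" using x(3) by simp
    then have "t2 = 1" using G(3) by simp
    have "DD x > 0" using DDpos g1z x(1) by auto
    then have "- (t1 * ph x + t2 * an * DD x) \<le> 0" using \<open>t1 = 0\<close> \<open>t2 = 1\<close> an_pos by simp
    then show "\<exists>d\<le>0. ((\<lambda>x. - g2 x) has_real_derivative d) (at x)"
      using DERIV_minus[OF G(5)] by blast
  qed
  have g2z: "g2 \<tau> = 0" if "\<tau> \<in> {0..tf}" for \<tau> using A D that by force
  have gam: "gamma fv M fc an (fst (y \<tau>)) (fst (snd (y \<tau>))) (u \<tau>) = DD \<tau> * an / (DD \<tau> * an - ph \<tau>)" for \<tau>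
    by (simp add: gamma_def DD_def ph_def)
  have part1: "\<forall>\<tau>\<in>{0..tf}. y \<tau> \<in> Sigma_set fc
            \<and> 0 < gamma fv M fc an (fst (y \<tau>)) (fst (snd (y \<tau>))) (u \<tau>)
            \<and> gamma fv M fc an (fst (y \<tau>)) (fst (snd (y \<tau>))) (u \<tau>) \<le> 1"
  proof
    fix \<tau> assume t: "\<tau> \<in> {0..tf}"
    have S: "y \<tau> \<in> Sigma_set fc" using g1z[OF t] g2z[OF t] by (simp add: Sigma_set_def g1_def g2_def G1_def G2_def)
    have Dp: "DD \<tau> > 0" using DDpos g1z t by blast
    have pn: "ph \<tau> \<le> 0" using persistent t by (simp add: ph_def)
    have pos: "DD \<tau> * an > 0" using Dp an_pos by simp
    have "0 < DD \<tau> * an / (DD \<tau> * an - ph \<tau>)" using pos pn by simp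
    moreover have "DD \<tau> * an / (DD \<tau> * an - ph \<tau>) \<le> 1" using pos pn by (simp add: divide_le_eq_1)
    ultimately show "y \<tau> \<in> Sigma_set fc
            \<and> 0 < gamma fv M fc an (fst (y \<tau>)) (fst (snd (y \<tau>))) (u \<tau>)
            \<and> gamma fv M fc an (fst (y \<tau>)) (fst (snd (y \<tau>))) (u \<tau>) \<le> 1" using S gam by simp
  qed
  have part2: "\<tau> \<in> {0..tf} \<longrightarrow>
            (\<exists>!\<theta>. TF_mult fc (y \<tau>) \<theta> \<and>
                 vector_derivative y (at \<tau> within {0..tf})
                   = fst \<theta> *\<^sub>R f1 fv (y \<tau>) (u \<tau>) + snd \<theta> *\<^sub>R f2 M fc an (y \<tau>))
          \<and> (y has_vector_derivative
                gamma fv M fc an (fst (y \<tau>)) (fst (snd (y \<tau>))) (u \<tau>) *\<^sub>R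
                  (fst (fDAE fv M fc (fst (y \<tau>)) (fst (snd (y \<tau>))) (u \<tau>)),
                   snd (fDAE fv M fc (fst (y \<tau>)) (fst (snd (y \<tau>))) (u \<tau>)), 1))
              (at \<tau> within {0..tf})"
    if tN: "\<tau> \<notin> N" "\<tau> \<noteq> 0" "\<tau> \<noteq> tf" for \<tau>
  proof
    assume "\<tau> \<in> {0..tf}"
    then have x: "\<tau> \<in> {0<..<tf}" using tN by auto
    have atx: "at \<tau> within {0..tf} = at \<tau>" using x by (simp add: at_within_Icc_at)
    obtain t1 t2 d where G: "t1 \<ge> 0" "t2 \<ge> 0" "t1 + t2 = 1"
      "(g2 has_real_derivative t1 * ph \<tau> + t2 * an * DD \<tau>) (at \<tau>)"
      "(y has_vector_derivative d) (at \<tau>)" "TF_mult fc (y \<tau>) (t1, t2)"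
      "d = t1 *\<^sub>R f1 fv (y \<tau>) (u \<tau>) + t2 *\<^sub>R f2 M fc an (y \<tau>)"
      using good[OF x tN(1)] by blast
    have z: "t1 * ph \<tau> + t2 * an * DD \<tau> = 0" using locz[OF x G(4)] g2z by blast
    have Dp: "DD \<tau> > 0" using DDpos g1z x by auto
    have pn: "ph \<tau> \<le> 0" using persistent x by (simp add: ph_def)
    have "DD \<tau> * an > 0" using Dp an_pos by simp
    then have den: "DD \<tau> * an - ph \<tau> > 0" using pn by linarith
    have t2e: "t2 = 1 - t1" using G(3) by simp
    have "t1 * (DD \<tau> * an - ph \<tau>) = DD \<tau> * an" using z t2e by (simp add: algebra_simps)
    then have t1g: "t1 = DD \<tau> * an / (DD \<tau> * an - ph \<tau>)" using den by (simp add: field_simps)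
    have t2a: "t2 * an = - (t1 * (ph \<tau> / DD \<tau>))" using z Dp by (simp add: field_simps)
    have vd: "vector_derivative y (at \<tau> within {0..tf}) = d" using G(5) atx by (simp add: vector_derivative_at)
    have uniq: "\<exists>!\<theta>. TF_mult fc (y \<tau>) \<theta> \<and>
                 vector_derivative y (at \<tau> within {0..tf})
                   = fst \<theta> *\<^sub>R f1 fv (y \<tau>) (u \<tau>) + snd \<theta> *\<^sub>R f2 M fc an (y \<tau>)"
    proof (rule ex1I[of _ "(t1, t2)"])
      show "TF_mult fc (y \<tau>) (t1, t2) \<and> vector_derivative y (at \<tau> within {0..tf})
          = fst (t1, t2) *\<^sub>R f1 fv (y \<tau>) (u \<tau>) + snd (t1, t2) *\<^sub>R f2 M fc an (y \<tau>)"
        using G(6,7) vd by simp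
      fix \<theta> assume th: "TF_mult fc (y \<tau>) \<theta> \<and> vector_derivative y (at \<tau> within {0..tf})
          = fst \<theta> *\<^sub>R f1 fv (y \<tau>) (u \<tau>) + snd \<theta> *\<^sub>R f2 M fc an (y \<tau>)"
      then have "snd (snd d) = fst \<theta>" using vd by (simp add: f1_def f2_def)
      moreover have "snd (snd d) = t1" using G(7) by (simp add: f1_def f2_def)
      moreover have "fst \<theta> + snd \<theta> = 1" using th by (simp add: TF_mult_def)
      ultimately show "\<theta> = (t1, t2)" using t2e by (simp add: prod_eq_iff)
    qed
    have "d = gamma fv M fc an (fst (y \<tau>)) (fst (snd (y \<tau>))) (u \<tau>) *\<^sub>R
                  (fst (fDAE fv M fc (fst (y \<tau>)) (fst (snd (y \<tau>))) (u \<tau>)),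
                   snd (fDAE fv M fc (fst (y \<tau>)) (fst (snd (y \<tau>))) (u \<tau>)), 1)"
    proof -
      have "t2 *\<^sub>R (an *\<^sub>R w) = - (t1 * (ph \<tau> / DD \<tau>)) *\<^sub>R w" for w :: "real^'n"
        using t2a by (simp add: scaleR_scaleR mult.commute)
      then show ?thesis
        using G(7) by (simp add: gam t1g[symmetric] fDAE_def fDAE_v_def f1_def f2_def ph_def[symmetric]
            DD_def[symmetric] scaleR_diff_right prod_eq_iff)
    qed
    then show "(\<exists>!\<theta>. TF_mult fc (y \<tau>) \<theta> \<and>
                 vector_derivative y (at \<tau> within {0..tf})
                   = fst \<theta> *\<^sub>R f1 fv (y \<tau>) (u \<tau>) + snd \<theta> *\<^sub>R f2 M fc an (y \<tau>))
          \<and> (y has_vector_derivative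
                gamma fv M fc an (fst (y \<tau>)) (fst (snd (y \<tau>))) (u \<tau>) *\<^sub>R
                  (fst (fDAE fv M fc (fst (y \<tau>)) (fst (snd (y \<tau>))) (u \<tau>)),
                   snd (fDAE fv M fc (fst (y \<tau>)) (fst (snd (y \<tau>))) (u \<tau>)), 1))
              (at \<tau> within {0..tf})"
      using uniq G(5) atx by simp
  qed
  have "AE \<tau> in lborel. \<tau> \<notin> N" using Nnull by (rule AE_not_in)
  moreover have "AE \<tau> in lborel. \<tau> \<noteq> 0" by (rule AE_lborel_singleton)
  moreover have "AE \<tau> in lborel. \<tau> \<noteq> tf" by (rule AE_lborel_singleton)
  ultimately have "AE \<tau> in lborel. \<tau> \<in> {0..tf} \<longrightarrow>
            (\<exists>!\<theta>. TF_mult fc (y \<tau>) \<theta> \<and>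
                 vector_derivative y (at \<tau> within {0..tf})
                   = fst \<theta> *\<^sub>R f1 fv (y \<tau>) (u \<tau>) + snd \<theta> *\<^sub>R f2 M fc an (y \<tau>))
          \<and> (y has_vector_derivative
                gamma fv M fc an (fst (y \<tau>)) (fst (snd (y \<tau>))) (u \<tau>) *\<^sub>R
                  (fst (fDAE fv M fc (fst (y \<tau>)) (fst (snd (y \<tau>))) (u \<tau>)),
                   snd (fDAE fv M fc (fst (y \<tau>)) (fst (snd (y \<tau>))) (u \<tau>)), 1))
              (at \<tau> within {0..tf})"
    by eventually_elim (use part2 in blast)
  with part1 show ?thesis by blast
qed


end
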